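(* Let $C\subseteq[n]$ be a nonempty proper subset and let $\ket{\psi}=\ket{a}_C\otimes\ket{b}_{\overline{C}}$ be an $n$-qubit state, where $\ket{a}_C$ and $\ket{b}_{\overline{C}}$ are each $\epsilon$-far from every multipartite product state. Suppose we are given two copies of $\ket{\psi}$ and run the SWAP test on a nonempty proper subset $S\subseteq[n]$ of the qubits. If $S=C$ or $S=\overline{C}$, the SWAP test always accepts. If $S\ne C,\overline{C}$, the SWAP test accepts with probability at most $1-\epsilon^2/2$.
   Context: A state on a set $Q$ of qubits is multipartite product if it equals $\ket{a'}_D\otimes\ket{b'}_{Q\setminus D}$ for some nonempty proper $D\subsetneq Q$; a pure state $\ket{\phi}$ is $\epsilon$-far from a set $\mathcal{P}$ if $|\langle\phi|\chi\rangle|^2\le1-\epsilon^2$ for all $\ket{\chi}\in\mathcal{P}$. The SWAP test on the qubits $S$ of two copies $\ket{\psi}\otimes\ket{\psi}$: append an ancilla qubit in $\ket{+}$, apply, controlled on the ancilla, the unitary that swaps the qubits in $S$ of the first copy with the corresponding qubits of the second copy, apply a Hadamard to the ancilla, measure it in the standard basis and accept on outcome $0$. Equivalently it measures the projector $\frac12(I+\mathrm{SWAP}_S)$, with acceptance probability $\frac12+\frac12\mathrm{Tr}(\psi_S^2)$. *)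

theory Defs
  imports Complex_Main
begin

text \<open>A pure state on a finite set Q of qubits (labelled by naturals) is a function
  assigning an amplitude to each computational basis string; a basis string is
  encoded as the subset x of Q of qubits in state 1. Only values on Pow Q matter.\<close>

definition is_state :: "nat set \<Rightarrow> (nat set \<Rightarrow> complex) \<Rightarrow> bool" where
  "is_state Q \<phi> \<longleftrightarrow> (\<Sum>x\<in>Pow Q. (cmod (\<phi> x))^2) = 1"

definition inner_q :: "nat set \<Rightarrow> (nat set \<Rightarrow> complex) \<Rightarrow> (nat set \<Rightarrow> complex) \<Rightarrow> complex" where
  "inner_q Q \<phi> \<chi> = (\<Sum>x\<in>Pow Q. cnj (\<phi> x) * \<chi> x)"

definition tensor_q :: "nat set \<Rightarrow> nat set \<Rightarrow> (nat set \<Rightarrow> complex) \<Rightarrow> (nat set \<Rightarrow> complex) \<Rightarrow> (nat set \<Rightarrow> complex)" where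
  "tensor_q D E a b = (\<lambda>x. a (x \<inter> D) * b (x \<inter> E))"

definition multipartite_product :: "nat set \<Rightarrow> (nat set \<Rightarrow> complex) \<Rightarrow> bool" where
  "multipartite_product Q \<chi> \<longleftrightarrow> is_state Q \<chi> \<and>
     (\<exists>D a' b'. D \<noteq> {} \<and> D \<subset> Q \<and> is_state D a' \<and> is_state (Q - D) b' \<and>
        (\<forall>x\<in>Pow Q. \<chi> x = tensor_q D (Q - D) a' b' x))"

definition eps_far_from_product :: "nat set \<Rightarrow> real \<Rightarrow> (nat set \<Rightarrow> complex) \<Rightarrow> bool" where
  "eps_far_from_product Q \<epsilon> \<phi> \<longleftrightarrow>
     (\<forall>\<chi>. multipartite_product Q \<chi> \<longrightarrow> (cmod (inner_q Q \<phi> \<chi>))^2 \<le> 1 - \<epsilon>^2)"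

definition two_copies :: "(nat set \<Rightarrow> complex) \<Rightarrow> (nat set \<times> nat set \<Rightarrow> complex)" where
  "two_copies \<psi> = (\<lambda>(x1, x2). \<psi> x1 * \<psi> x2)"

definition swap_on :: "nat set \<Rightarrow> nat set \<times> nat set \<Rightarrow> nat set \<times> nat set" where
  "swap_on S = (\<lambda>(x1, x2). ((x1 - S) \<union> (x2 \<inter> S), (x2 - S) \<union> (x1 \<inter> S)))"

text \<open>Acceptance probability of the SWAP test on qubits S of two copies of psi (a state on Q):
  the expectation of the projector (I + SWAP_S)/2 in the state psi \<otimes> psi.\<close>
definition swap_test_accept_prob :: "nat set \<Rightarrow> nat set \<Rightarrow> (nat set \<Rightarrow> complex) \<Rightarrow> real" where
  "swap_test_accept_prob Q S \<psi> =
     Re (\<Sum>p\<in>Pow Q \<times> Pow Q. cnj (two_copies \<psi> p) *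
           ((two_copies \<psi> p + two_copies \<psi> (swap_on S p)) / 2))"

end

theory Submission
  imports Defs "HOL-Analysis.Analysis"
begin


lemma sum_Pow_Un:
  assumes "A \<inter> B = {}"
  shows "(\<Sum>x\<in>Pow (A \<union> B). f x) = (\<Sum>u\<in>Pow A. \<Sum>v\<in>Pow B. f (u \<union> v))"
proof -
  have "(\<Sum>x\<in>Pow (A \<union> B). f x) = (\<Sum>p\<in>Pow A \<times> Pow B. f (fst p \<union> snd p))"
    by (rule sum.reindex_bij_witness[where i="\<lambda>p. fst p \<union> snd p" and j="\<lambda>x. (x \<inter> A, x \<inter> B)"])
       (use assms in \<open>auto intro!: arg_cong[where f=f]\<close>)
  also have "\<dots> = (\<Sum>u\<in>Pow A. \<Sum>v\<in>Pow B. f (u \<union> v))"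
    by (simp add: sum.cartesian_product case_prod_beta)
  finally show ?thesis .
qed

lemma complex_CS:
  fixes z y :: "'i \<Rightarrow> complex"
  shows "(cmod (\<Sum>i\<in>I. cnj (z i) * y i))\<^sup>2 \<le> (\<Sum>i\<in>I. (cmod (z i))\<^sup>2) * (\<Sum>i\<in>I. (cmod (y i))\<^sup>2)"
proof -
  have "cmod (\<Sum>i\<in>I. cnj (z i) * y i) \<le> (\<Sum>i\<in>I. cmod (z i) * cmod (y i))"
    by (rule order_trans[OF norm_sum]) (simp add: norm_mult)
  hence "(cmod (\<Sum>i\<in>I. cnj (z i) * y i))\<^sup>2 \<le> (\<Sum>i\<in>I. cmod (z i) * cmod (y i))\<^sup>2"
    by (rule power_mono) simp_all
  also have "\<dots> \<le> (\<Sum>i\<in>I. (cmod (z i))\<^sup>2) * (\<Sum>i\<in>I. (cmod (y i))\<^sup>2)"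
    by (rule Cauchy_Schwarz_ineq_sum)
  finally show ?thesis .
qed

lemma gram_step:
  fixes M :: "'u \<Rightarrow> 'v \<Rightarrow> complex"
  assumes fU: "finite U" and fV: "finite V" and R: "R \<ge> 0"
    and H: "\<And>w. (\<Sum>u\<in>U. (cmod (\<Sum>v\<in>V. M u v * w v))\<^sup>2) \<le> R * (\<Sum>v\<in>V. (cmod (w v))\<^sup>2)"
  shows "(\<Sum>v\<in>V. (cmod (\<Sum>u\<in>U. cnj (M u v) * z u))\<^sup>2) \<le> R * (\<Sum>u\<in>U. (cmod (z u))\<^sup>2)"
proof -
  define y where "y v = (\<Sum>u\<in>U. cnj (M u v) * z u)" for v
  define N where "N = (\<Sum>v\<in>V. (cmod (y v))\<^sup>2)"
  define Z where "Z = (\<Sum>u\<in>U. (cmod (z u))\<^sup>2)"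
  have N0: "N \<ge> 0" unfolding N_def by (simp add: sum_nonneg)
  have Z0: "Z \<ge> 0" unfolding Z_def by (simp add: sum_nonneg)
  have "complex_of_real N = (\<Sum>v\<in>V. cnj (y v) * y v)"
    unfolding N_def of_real_sum by (intro sum.cong refl) (simp only: complex_norm_square mult.commute)
  also have "\<dots> = (\<Sum>v\<in>V. (\<Sum>u\<in>U. M u v * cnj (z u)) * y v)"
    unfolding y_def by simp
  also have "\<dots> = (\<Sum>u\<in>U. cnj (z u) * (\<Sum>v\<in>V. M u v * y v))"
    unfolding sum_distrib_left sum_distrib_right by (subst sum.swap) (simp add: mult_ac)
  finally have Neq: "complex_of_real N = (\<Sum>u\<in>U. cnj (z u) * (\<Sum>v\<in>V. M u v * y v))" .
  have "N\<^sup>2 = (cmod (complex_of_real N))\<^sup>2" using N0 by simp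
  also have "\<dots> \<le> Z * (\<Sum>u\<in>U. (cmod (\<Sum>v\<in>V. M u v * y v))\<^sup>2)"
    unfolding Neq Z_def by (rule complex_CS)
  also have "\<dots> \<le> Z * (R * N)"
    unfolding N_def by (rule mult_left_mono[OF H Z0])
  finally have NN: "N * N \<le> (R * Z) * N" by (simp add: power2_eq_square mult_ac)
  have "N \<le> R * Z"
  proof (cases "N = 0")
    case True thus ?thesis using R Z0 by simp
  next
    case False thus ?thesis using NN N0 by (metis mult_right_le_imp_le less_eq_real_def)
  qed
  thus ?thesis unfolding N_def Z_def y_def .
qed

lemma gram:
  fixes M :: "'u \<Rightarrow> 'v \<Rightarrow> complex"
  assumes fU: "finite U" and fV: "finite V" and R: "R \<ge> 0"
    and H: "\<And>w. (\<Sum>u\<in>U. (cmod (\<Sum>v\<in>V. M u v * w v))\<^sup>2) \<le> R * (\<Sum>v\<in>V. (cmod (w v))\<^sup>2)"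
  shows "(\<Sum>v1\<in>V. \<Sum>v2\<in>V. (cmod (\<Sum>u\<in>U. cnj (M u v1) * M u v2))\<^sup>2)
          \<le> R * (\<Sum>u\<in>U. \<Sum>v\<in>V. (cmod (M u v))\<^sup>2)"
proof -
  have "(\<Sum>v1\<in>V. \<Sum>v2\<in>V. (cmod (\<Sum>u\<in>U. cnj (M u v1) * M u v2))\<^sup>2)
      = (\<Sum>v2\<in>V. \<Sum>v1\<in>V. (cmod (\<Sum>u\<in>U. cnj (M u v1) * M u v2))\<^sup>2)"
    by (rule sum.swap)
  also have "\<dots> \<le> (\<Sum>v2\<in>V. R * (\<Sum>u\<in>U. (cmod (M u v2))\<^sup>2))"
    by (rule sum_mono, rule gram_step[OF fU fV R H])
  also have "\<dots> = R * (\<Sum>u\<in>U. \<Sum>v\<in>V. (cmod (M u v))\<^sup>2)"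
    unfolding sum_distrib_left by (subst sum.swap) simp
  finally show ?thesis .
qed



definition swapsum :: "nat set \<Rightarrow> nat set \<Rightarrow> (nat set \<Rightarrow> complex) \<Rightarrow> complex" where
  "swapsum A K f = (\<Sum>x1\<in>Pow A. \<Sum>x2\<in>Pow A. cnj (f x1 * f x2) *
      (f ((x1 - K) \<union> (x2 \<inter> K)) * f ((x2 - K) \<union> (x1 \<inter> K))))"

lemma accept_eq:
  "swap_test_accept_prob Q S \<psi> = Re (swapsum Q {} \<psi>) / 2 + Re (swapsum Q S \<psi>) / 2"
proof -
  have "(\<Sum>p\<in>Pow Q \<times> Pow Q. cnj (two_copies \<psi> p) * ((two_copies \<psi> p + two_copies \<psi> (swap_on S p)) / 2))
      = (\<Sum>(x1,x2)\<in>Pow Q \<times> Pow Q. cnj (\<psi> x1 * \<psi> x2) *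
      (\<psi> ((x1 - {}) \<union> (x2 \<inter> {})) * \<psi> ((x2 - {}) \<union> (x1 \<inter> {}))) / 2
       + cnj (\<psi> x1 * \<psi> x2) *
      (\<psi> ((x1 - S) \<union> (x2 \<inter> S)) * \<psi> ((x2 - S) \<union> (x1 \<inter> S))) / 2)"
    by (intro sum.cong refl) (auto simp: two_copies_def swap_on_def field_simps)
  also have "\<dots> = swapsum Q {} \<psi> / 2 + swapsum Q S \<psi> / 2"
    unfolding swapsum_def sum.cartesian_product sum_divide_distrib sum.distrib[symmetric]
    by (simp add: case_prod_beta)
  finally show ?thesis unfolding swap_test_accept_prob_def by simp
qed

lemma sum4:
  "(\<Sum>c1\<in>P. \<Sum>d1\<in>Q. \<Sum>c2\<in>P. \<Sum>d2\<in>Q. (A c1 c2 :: complex) * B d1 d2)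
   = (\<Sum>c1\<in>P. \<Sum>c2\<in>P. A c1 c2) * (\<Sum>d1\<in>Q. \<Sum>d2\<in>Q. B d1 d2)"
proof -
  have "(\<Sum>c1\<in>P. \<Sum>d1\<in>Q. \<Sum>c2\<in>P. \<Sum>d2\<in>Q. A c1 c2 * B d1 d2)
      = (\<Sum>c1\<in>P. \<Sum>c2\<in>P. \<Sum>d1\<in>Q. \<Sum>d2\<in>Q. A c1 c2 * B d1 d2)"
    by (rule sum.cong[OF refl], rule sum.swap)
  also have "\<dots> = (\<Sum>c1\<in>P. \<Sum>c2\<in>P. A c1 c2 * (\<Sum>d1\<in>Q. \<Sum>d2\<in>Q. B d1 d2))"
    by (simp only: sum_distrib_left)
  also have "\<dots> = (\<Sum>c1\<in>P. \<Sum>c2\<in>P. A c1 c2) * (\<Sum>d1\<in>Q. \<Sum>d2\<in>Q. B d1 d2)"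
    by (simp only: sum_distrib_right)
  finally show ?thesis .
qed

lemma reorder4:
  "(\<Sum>a\<in>P. \<Sum>b\<in>Q. \<Sum>c\<in>P. \<Sum>d\<in>Q. g a b c d) = (\<Sum>b\<in>Q. \<Sum>d\<in>Q. \<Sum>a\<in>P. \<Sum>c\<in>P. g a b c d)"
proof -
  have "(\<Sum>a\<in>P. \<Sum>b\<in>Q. \<Sum>c\<in>P. \<Sum>d\<in>Q. g a b c d) = (\<Sum>b\<in>Q. \<Sum>a\<in>P. \<Sum>c\<in>P. \<Sum>d\<in>Q. g a b c d)"
    by (rule sum.swap)
  also have "\<dots> = (\<Sum>b\<in>Q. \<Sum>a\<in>P. \<Sum>d\<in>Q. \<Sum>c\<in>P. g a b c d)"
    by (intro sum.cong refl sum.swap)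
  also have "\<dots> = (\<Sum>b\<in>Q. \<Sum>d\<in>Q. \<Sum>a\<in>P. \<Sum>c\<in>P. g a b c d)"
    by (intro sum.cong refl sum.swap)
  finally show ?thesis .
qed

lemma factor:
  assumes disj: "C \<inter> E = {}"
    and psi: "\<forall>x\<in>Pow (C \<union> E). \<psi> x = a (x \<inter> C) * b (x \<inter> E)"
  shows "swapsum (C \<union> E) K \<psi> = swapsum C K a * swapsum E K b"
proof -
  have pe: "\<psi> (c \<union> d) = a c * b d" if "c \<subseteq> C" "d \<subseteq> E" for c d
  proof -
    have "(c \<union> d) \<inter> C = c" "(c \<union> d) \<inter> E = d" using that disj by blast+
    moreover have "c \<union> d \<in> Pow (C \<union> E)" using that by blast
    ultimately show ?thesis using psi by metis
  qed
  have key: "cnj (\<psi> (c1 \<union> d1) * \<psi> (c2 \<union> d2)) *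
      (\<psi> ((c1 \<union> d1 - K) \<union> ((c2 \<union> d2) \<inter> K)) * \<psi> ((c2 \<union> d2 - K) \<union> ((c1 \<union> d1) \<inter> K)))
    = (cnj (a c1 * a c2) * (a ((c1 - K) \<union> (c2 \<inter> K)) * a ((c2 - K) \<union> (c1 \<inter> K))))
      * (cnj (b d1 * b d2) * (b ((d1 - K) \<union> (d2 \<inter> K)) * b ((d2 - K) \<union> (d1 \<inter> K))))"
    if "c1 \<subseteq> C" "c2 \<subseteq> C" "d1 \<subseteq> E" "d2 \<subseteq> E" for c1 c2 d1 d2
  proof -
    have s1: "(c1 \<union> d1 - K) \<union> ((c2 \<union> d2) \<inter> K) = ((c1 - K) \<union> (c2 \<inter> K)) \<union> ((d1 - K) \<union> (d2 \<inter> K))"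
      by blast
    have s2: "(c2 \<union> d2 - K) \<union> ((c1 \<union> d1) \<inter> K) = ((c2 - K) \<union> (c1 \<inter> K)) \<union> ((d2 - K) \<union> (d1 \<inter> K))"
      by blast
    have "(c1 - K) \<union> (c2 \<inter> K) \<subseteq> C" "(c2 - K) \<union> (c1 \<inter> K) \<subseteq> C"
      "(d1 - K) \<union> (d2 \<inter> K) \<subseteq> E" "(d2 - K) \<union> (d1 \<inter> K) \<subseteq> E" using that by blast+
    then show ?thesis unfolding s1 s2 using that by (simp add: pe mult_ac)
  qed
  have "swapsum (C \<union> E) K \<psi> = (\<Sum>c1\<in>Pow C. \<Sum>d1\<in>Pow E. \<Sum>c2\<in>Pow C. \<Sum>d2\<in>Pow E.
      (cnj (a c1 * a c2) * (a ((c1 - K) \<union> (c2 \<inter> K)) * a ((c2 - K) \<union> (c1 \<inter> K))))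
      * (cnj (b d1 * b d2) * (b ((d1 - K) \<union> (d2 \<inter> K)) * b ((d2 - K) \<union> (d1 \<inter> K)))))"
    unfolding swapsum_def sum_Pow_Un[OF disj]
    by (intro sum.cong refl key) auto
  also have "\<dots> = swapsum C K a * swapsum E K b"
    unfolding swapsum_def by (rule sum4)
  finally show ?thesis .
qed

lemma swapsum_restrict: "swapsum A K f = swapsum A (K \<inter> A) f"
proof -
  have "(x1 - K) \<union> (x2 \<inter> K) = (x1 - (K \<inter> A)) \<union> (x2 \<inter> (K \<inter> A))"
    if "x1 \<subseteq> A" "x2 \<subseteq> A" for x1 x2 using that by blast
  then show ?thesis unfolding swapsum_def by (intro sum.cong refl) auto
qed

lemma norm_sum1: "is_state A f \<Longrightarrow> (\<Sum>x\<in>Pow A. cnj (f x) * f x) = 1"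
proof -
  assume "is_state A f"
  hence "complex_of_real (\<Sum>x\<in>Pow A. (cmod (f x))\<^sup>2) = 1" unfolding is_state_def by simp
  thus ?thesis unfolding of_real_sum
    by (metis (no_types, lifting) complex_norm_square mult.commute sum.cong)
qed

lemma swapsum_trivial:
  assumes st: "is_state A f" and K: "K \<inter> A = {} \<or> A \<subseteq> K"
  shows "swapsum A K f = 1"
proof -
  have "swapsum A K f = (\<Sum>x1\<in>Pow A. \<Sum>x2\<in>Pow A. (cnj (f x1) * f x1) * (cnj (f x2) * f x2))"
    unfolding swapsum_def
  proof (intro sum.cong refl)
    fix x1 x2 assume "x1 \<in> Pow A" "x2 \<in> Pow A"
    then consider "(x1 - K) \<union> (x2 \<inter> K) = x1" "(x2 - K) \<union> (x1 \<inter> K) = x2"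
      | "(x1 - K) \<union> (x2 \<inter> K) = x2" "(x2 - K) \<union> (x1 \<inter> K) = x1" using K by blast
    thus "cnj (f x1 * f x2) * (f ((x1 - K) \<union> (x2 \<inter> K)) * f ((x2 - K) \<union> (x1 \<inter> K)))
        = (cnj (f x1) * f x1) * (cnj (f x2) * f x2)" by cases (simp_all add: mult_ac)
  qed
  also have "\<dots> = (\<Sum>x1\<in>Pow A. cnj (f x1) * f x1) * (\<Sum>x2\<in>Pow A. cnj (f x2) * f x2)"
    by (rule sum_product[symmetric])
  finally show ?thesis using norm_sum1[OF st] by simp
qed

lemma swapsum_gram:
  assumes K: "K \<subseteq> A"
  shows "swapsum A K f = complex_of_real (\<Sum>v1\<in>Pow (A - K). \<Sum>v2\<in>Pow (A - K).
            (cmod (\<Sum>u\<in>Pow K. cnj (f (u \<union> v1)) * f (u \<union> v2)))\<^sup>2)"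
proof -
  have AE: "A = K \<union> (A - K)" using K by blast
  have disj: "K \<inter> (A - K) = {}" by blast
  have "swapsum A K f = (\<Sum>u1\<in>Pow K. \<Sum>v1\<in>Pow (A - K). \<Sum>u2\<in>Pow K. \<Sum>v2\<in>Pow (A - K).
      cnj (f (u1 \<union> v1)) * f (u1 \<union> v2) * (f (u2 \<union> v1) * cnj (f (u2 \<union> v2))))"
    unfolding swapsum_def
    apply (subst (1 2) AE)
    unfolding sum_Pow_Un[OF disj]
  proof (intro sum.cong refl)
    fix u1 v1 u2 v2 assume "u1 \<in> Pow K" "v1 \<in> Pow (A - K)" "u2 \<in> Pow K" "v2 \<in> Pow (A - K)"
    then have "(u1 \<union> v1 - K) \<union> ((u2 \<union> v2) \<inter> K) = u2 \<union> v1"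
      "(u2 \<union> v2 - K) \<union> ((u1 \<union> v1) \<inter> K) = u1 \<union> v2" by blast+
    then show "cnj (f (u1 \<union> v1) * f (u2 \<union> v2)) *
        (f ((u1 \<union> v1 - K) \<union> ((u2 \<union> v2) \<inter> K)) * f ((u2 \<union> v2 - K) \<union> ((u1 \<union> v1) \<inter> K)))
      = cnj (f (u1 \<union> v1)) * f (u1 \<union> v2) * (f (u2 \<union> v1) * cnj (f (u2 \<union> v2)))"
      by (simp add: mult_ac)
  qed
  also have "\<dots> = (\<Sum>v1\<in>Pow (A - K). \<Sum>v2\<in>Pow (A - K). \<Sum>u1\<in>Pow K. \<Sum>u2\<in>Pow K.
      cnj (f (u1 \<union> v1)) * f (u1 \<union> v2) * (f (u2 \<union> v1) * cnj (f (u2 \<union> v2))))"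
    by (rule reorder4)
  also have "\<dots> = (\<Sum>v1\<in>Pow (A - K). \<Sum>v2\<in>Pow (A - K).
      (\<Sum>u\<in>Pow K. cnj (f (u \<union> v1)) * f (u \<union> v2)) * cnj (\<Sum>u\<in>Pow K. cnj (f (u \<union> v1)) * f (u \<union> v2)))"
    unfolding cnj_sum complex_cnj_mult complex_cnj_cnj sum_product ..
  also have "\<dots> = complex_of_real (\<Sum>v1\<in>Pow (A - K). \<Sum>v2\<in>Pow (A - K).
            (cmod (\<Sum>u\<in>Pow K. cnj (f (u \<union> v1)) * f (u \<union> v2)))\<^sup>2)"
    unfolding of_real_sum complex_norm_square ..
  finally show ?thesis .
qed



lemma prod_bound:
  assumes fA: "finite A" and K0: "K \<noteq> {}" and KA: "K \<subset> A"
    and far: "eps_far_from_product A \<epsilon> f"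
    and g: "is_state K g" and h: "is_state (A - K) h"
  shows "(cmod (\<Sum>u\<in>Pow K. \<Sum>v\<in>Pow (A - K). cnj (f (u \<union> v)) * (g u * h v)))\<^sup>2 \<le> 1 - \<epsilon>\<^sup>2"
proof -
  have AE: "A = K \<union> (A - K)" using KA by blast
  have disj: "K \<inter> (A - K) = {}" by blast
  define chv where "chv = tensor_q K (A - K) g h"
  have chi: "chv (u \<union> v) = g u * h v" if "u \<subseteq> K" "v \<subseteq> A - K" for u v
  proof -
    have "(u \<union> v) \<inter> K = u" "(u \<union> v) \<inter> (A - K) = v" using that by blast+
    thus ?thesis unfolding chv_def tensor_q_def by simp
  qed
  have "(\<Sum>x\<in>Pow A. (cmod (chv x))\<^sup>2) = (\<Sum>u\<in>Pow K. \<Sum>v\<in>Pow (A - K). (cmod (g u))\<^sup>2 * (cmod (h v))\<^sup>2)"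
    apply (subst AE) unfolding sum_Pow_Un[OF disj]
    by (intro sum.cong refl) (auto simp: chi norm_mult power_mult_distrib)
  also have "\<dots> = (\<Sum>u\<in>Pow K. (cmod (g u))\<^sup>2) * (\<Sum>v\<in>Pow (A - K). (cmod (h v))\<^sup>2)"
    by (rule sum_product[symmetric])
  also have "\<dots> = 1" using g h unfolding is_state_def by simp
  finally have "is_state A chv" unfolding is_state_def .
  hence mp: "multipartite_product A chv"
    unfolding multipartite_product_def using K0 KA g h chv_def by blast
  have "inner_q A f chv = (\<Sum>u\<in>Pow K. \<Sum>v\<in>Pow (A - K). cnj (f (u \<union> v)) * (g u * h v))"
    unfolding inner_q_def apply (subst AE) unfolding sum_Pow_Un[OF disj]
    by (intro sum.cong refl) (auto simp: chi)
  thus ?thesis using far mp unfolding eps_far_from_product_def by metis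
qed

lemma op_bound:
  assumes fA: "finite A" and K0: "K \<noteq> {}" and KA: "K \<subset> A"
    and far: "eps_far_from_product A \<epsilon> f"
  shows "1 - \<epsilon>\<^sup>2 \<ge> 0"
    and "(\<Sum>u\<in>Pow K. (cmod (\<Sum>v\<in>Pow (A - K). f (u \<union> v) * w v))\<^sup>2)
           \<le> (1 - \<epsilon>\<^sup>2) * (\<Sum>v\<in>Pow (A - K). (cmod (w v))\<^sup>2)"
proof -
  have fK: "finite K" using fA KA finite_subset by blast
  have fAK: "finite (A - K)" using fA by simp
  define e :: "nat set \<Rightarrow> complex" where "e u = (if u = {} then 1 else 0)" for u
  have e: "is_state B e" if "finite B" for B
  proof -
    have eq: "(\<lambda>x. (cmod (e x))\<^sup>2) = (\<lambda>x. if x = {} then 1 else 0)" by (auto simp: e_def fun_eq_iff)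
    show ?thesis unfolding is_state_def eq using that by simp
  qed
  show R0: "1 - \<epsilon>\<^sup>2 \<ge> 0"
    using prod_bound[OF fA K0 KA far e[OF fK] e[OF fAK]] by (meson order_trans zero_le_power2)
  define R where "R = 1 - \<epsilon>\<^sup>2"
  define y where "y u = (\<Sum>v\<in>Pow (A - K). f (u \<union> v) * w v)" for u
  define Y where "Y = (\<Sum>u\<in>Pow K. (cmod (y u))\<^sup>2)"
  define W where "W = (\<Sum>v\<in>Pow (A - K). (cmod (w v))\<^sup>2)"
  have Y0: "Y \<ge> 0" unfolding Y_def by (simp add: sum_nonneg)
  have W0: "W \<ge> 0" unfolding W_def by (simp add: sum_nonneg)
  have "Y \<le> R * W"
  proof (cases "Y = 0")
    case True thus ?thesis using R0 W0 R_def by simp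
  next
    case False
    hence Yp: "Y > 0" using Y0 by simp
    have Wp: "W > 0"
    proof (rule ccontr)
      assume "\<not> W > 0"
      hence "W = 0" using W0 by simp
      hence "\<forall>v\<in>Pow (A - K). w v = 0" unfolding W_def using fAK
        by (simp add: sum_nonneg_eq_0_iff)
      hence "y u = 0" for u unfolding y_def by simp
      hence "Y = 0" unfolding Y_def by simp
      thus False using False by simp
    qed
    define sY where "sY = sqrt Y"
    define sW where "sW = sqrt W"
    have sYp: "sY > 0" and sWp: "sW > 0" using Yp Wp sY_def sW_def by simp_all
    define g where "g u = y u / complex_of_real sY" for u
    define h where "h v = cnj (w v) / complex_of_real sW" for v
    have gs: "is_state K g" unfolding is_state_def g_def
      using sYp Yp by (simp add: norm_divide power_divide sY_def sum_divide_distrib[symmetric] Y_def[symmetric])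
    have hs: "is_state (A - K) h" unfolding is_state_def h_def
      using sWp Wp by (simp add: norm_divide power_divide sW_def sum_divide_distrib[symmetric] W_def[symmetric])
    have "(\<Sum>u\<in>Pow K. \<Sum>v\<in>Pow (A - K). cnj (f (u \<union> v)) * (g u * h v))
        = (\<Sum>u\<in>Pow K. cnj (y u) * y u) / complex_of_real (sY * sW)"
      unfolding sum_divide_distrib
    proof (intro sum.cong refl)
      fix u
      show "(\<Sum>v\<in>Pow (A - K). cnj (f (u \<union> v)) * (g u * h v)) = cnj (y u) * y u / complex_of_real (sY * sW)"
      proof -
        have "cnj (y u) = (\<Sum>v\<in>Pow (A - K). cnj (f (u \<union> v)) * cnj (w v))"
          unfolding y_def cnj_sum by simp
        have "(\<Sum>v\<in>Pow (A - K). cnj (f (u \<union> v)) * (g u * h v))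
            = (\<Sum>v\<in>Pow (A - K). cnj (f (u \<union> v)) * cnj (w v) * y u / complex_of_real (sY * sW))"
          by (intro sum.cong refl) (simp add: g_def h_def mult_ac)
        also have "\<dots> = (\<Sum>v\<in>Pow (A - K). cnj (f (u \<union> v)) * cnj (w v)) * y u / complex_of_real (sY * sW)"
          by (simp only: sum_distrib_right sum_divide_distrib)
        finally show ?thesis using \<open>cnj (y u) = _\<close> by simp
      qed
    qed
    also have "(\<Sum>u\<in>Pow K. cnj (y u) * y u) = complex_of_real Y"
      unfolding Y_def of_real_sum
      by (intro sum.cong refl) (simp only: complex_norm_square mult.commute)
    finally have "(cmod (\<Sum>u\<in>Pow K. \<Sum>v\<in>Pow (A - K). cnj (f (u \<union> v)) * (g u * h v)))\<^sup>2
        = Y\<^sup>2 / (sY\<^sup>2 * sW\<^sup>2)"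
      using sYp sWp Y0 by (simp add: norm_divide power_divide power_mult_distrib norm_mult)
    also have "\<dots> = Y / W" using Y0 W0 Yp unfolding sY_def sW_def by (simp add: power2_eq_square)
    finally have "Y / W \<le> R" using prod_bound[OF fA K0 KA far gs hs] R_def by simp
    thus ?thesis using Wp by (simp add: divide_le_eq mult.commute)
  qed
  thus "(\<Sum>u\<in>Pow K. (cmod (\<Sum>v\<in>Pow (A - K). f (u \<union> v) * w v))\<^sup>2)
           \<le> (1 - \<epsilon>\<^sup>2) * (\<Sum>v\<in>Pow (A - K). (cmod (w v))\<^sup>2)"
    unfolding Y_def y_def W_def R_def .
qed



lemma side:
  assumes fA: "finite A" and st: "is_state A f" and far: "eps_far_from_product A \<epsilon> f"
  shows "\<exists>t. swapsum A S f = complex_of_real t \<and> 0 \<le> t \<and> t \<le> 1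
           \<and> (S \<inter> A \<noteq> {} \<and> \<not> A \<subseteq> S \<longrightarrow> t \<le> 1 - \<epsilon>\<^sup>2)"
proof (cases "S \<inter> A \<noteq> {} \<and> \<not> A \<subseteq> S")
  case False
  hence "swapsum A S f = 1" using swapsum_trivial[OF st] by blast
  thus ?thesis using False by (intro exI[of _ 1]) auto
next
  case True
  define K where "K = S \<inter> A"
  have K0: "K \<noteq> {}" and KA: "K \<subset> A" using True K_def by blast+
  have ss: "swapsum A S f = swapsum A K f" unfolding K_def by (rule swapsum_restrict)
  define T where "T = (\<Sum>v1\<in>Pow (A - K). \<Sum>v2\<in>Pow (A - K).
            (cmod (\<Sum>u\<in>Pow K. cnj (f (u \<union> v1)) * f (u \<union> v2)))\<^sup>2)"
  have sT: "swapsum A S f = complex_of_real T"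
    unfolding ss T_def using KA by (intro swapsum_gram) auto
  have T0: "T \<ge> 0" unfolding T_def by (intro sum_nonneg) auto
  have fK: "finite K" using fA KA finite_subset by blast
  have R0: "1 - \<epsilon>\<^sup>2 \<ge> 0" by (rule op_bound(1)[OF fA K0 KA far])
  have "T \<le> (1 - \<epsilon>\<^sup>2) * (\<Sum>u\<in>Pow K. \<Sum>v\<in>Pow (A - K). (cmod (f (u \<union> v)))\<^sup>2)"
    unfolding T_def
    by (rule gram[where M="\<lambda>u v. f (u \<union> v)"]) (use fK fA R0 op_bound(2)[OF fA K0 KA far] in auto)
  also have "(\<Sum>u\<in>Pow K. \<Sum>v\<in>Pow (A - K). (cmod (f (u \<union> v)))\<^sup>2) = 1"
  proof -
    have AE: "A = K \<union> (A - K)" using KA by blast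
    have disj: "K \<inter> (A - K) = {}" by blast
    have "(\<Sum>x\<in>Pow A. (cmod (f x))\<^sup>2) = 1" using st unfolding is_state_def .
    thus ?thesis by (subst (asm) AE) (simp only: sum_Pow_Un[OF disj])
  qed
  finally have Tle: "T \<le> 1 - \<epsilon>\<^sup>2" by simp
  moreover have "T \<le> 1" using Tle zero_le_power2[of \<epsilon>] by linarith
  ultimately show ?thesis using sT T0 by (intro exI[of _ T]) auto
qed

theorem corollary2p18:
  fixes n :: nat and C S :: "nat set" and a b \<psi> :: "nat set \<Rightarrow> complex" and \<epsilon> :: real
  assumes "C \<noteq> {}" and "C \<subset> {1..n}"
    and "is_state C a" and "is_state ({1..n} - C) b"
    and "\<forall>x\<in>Pow {1..n}. \<psi> x = tensor_q C ({1..n} - C) a b x"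
    and "eps_far_from_product C \<epsilon> a" and "eps_far_from_product ({1..n} - C) \<epsilon> b"
    and "S \<noteq> {}" and "S \<subset> {1..n}"
  shows "(S = C \<or> S = {1..n} - C \<longrightarrow> swap_test_accept_prob {1..n} S \<psi> = 1)
       \<and> (S \<noteq> C \<and> S \<noteq> {1..n} - C \<longrightarrow> swap_test_accept_prob {1..n} S \<psi> \<le> 1 - \<epsilon>^2 / 2)"
proof -
  define Q :: "nat set" where "Q = {1..n}"
  define E where "E = Q - C"
  have QCE: "Q = C \<union> E" using assms(2) unfolding E_def Q_def by blast
  have disj: "C \<inter> E = {}" unfolding E_def by blast
  have fC: "finite C" using assms(2) finite_subset by blast
  have fE: "finite E" unfolding E_def Q_def by simp
  have psi0: "\<forall>x\<in>Pow Q. \<psi> x = a (x \<inter> C) * b (x \<inter> E)"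
    using assms(5) unfolding tensor_q_def E_def Q_def by simp
  have psi: "\<forall>x\<in>Pow (C \<union> E). \<psi> x = a (x \<inter> C) * b (x \<inter> E)"
    using psi0 QCE by simp
  have fac: "swapsum Q K \<psi> = swapsum C K a * swapsum E K b" for K
    unfolding QCE by (rule factor[OF disj psi])
  have stE: "is_state E b" using assms(4) unfolding E_def Q_def .
  have farE: "eps_far_from_product E \<epsilon> b" using assms(7) unfolding E_def Q_def .
  have acc: "swap_test_accept_prob Q S \<psi> = 1 / 2 + Re (swapsum C S a * swapsum E S b) / 2"
    unfolding accept_eq fac using swapsum_trivial[OF assms(3), of "{}"] swapsum_trivial[OF stE, of "{}"]
    by simp
  obtain tA where tA: "swapsum C S a = complex_of_real tA" "0 \<le> tA" "tA \<le> 1"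
      "S \<inter> C \<noteq> {} \<and> \<not> C \<subseteq> S \<longrightarrow> tA \<le> 1 - \<epsilon>\<^sup>2"
    using side[OF fC assms(3) assms(6), of S] by blast
  obtain tB where tB: "swapsum E S b = complex_of_real tB" "0 \<le> tB" "tB \<le> 1"
      "S \<inter> E \<noteq> {} \<and> \<not> E \<subseteq> S \<longrightarrow> tB \<le> 1 - \<epsilon>\<^sup>2"
    using side[OF fE stE farE, of S] by blast
  have acc2: "swap_test_accept_prob Q S \<psi> = 1 / 2 + tA * tB / 2"
    unfolding acc tA(1) tB(1) by simp
  have part1: "S = C \<or> S = E \<longrightarrow> swap_test_accept_prob Q S \<psi> = 1"
  proof
    assume h: "S = C \<or> S = E"
    have "swapsum C S a = 1" using h disj by (intro swapsum_trivial[OF assms(3)]) blast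
    moreover have "swapsum E S b = 1" using h disj by (intro swapsum_trivial[OF stE]) blast
    ultimately show "swap_test_accept_prob Q S \<psi> = 1" unfolding acc by simp
  qed
  have part2: "S \<noteq> C \<and> S \<noteq> E \<longrightarrow> swap_test_accept_prob Q S \<psi> \<le> 1 - \<epsilon>^2 / 2"
  proof
    assume h: "S \<noteq> C \<and> S \<noteq> E"
    have SQ: "S \<subset> C \<union> E" using assms(9) QCE Q_def by simp
    have "(S \<inter> C \<noteq> {} \<and> \<not> C \<subseteq> S) \<or> (S \<inter> E \<noteq> {} \<and> \<not> E \<subseteq> S)"
      using h SQ assms(8) disj by blast
    hence "tA * tB \<le> 1 - \<epsilon>\<^sup>2"
    proof
      assume "S \<inter> C \<noteq> {} \<and> \<not> C \<subseteq> S"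
      hence "tA \<le> 1 - \<epsilon>\<^sup>2" using tA by blast
      moreover have "tA * tB \<le> tA" using tA(2) tB(3) by (simp add: mult_left_le)
      ultimately show ?thesis by linarith
    next
      assume "S \<inter> E \<noteq> {} \<and> \<not> E \<subseteq> S"
      hence "tB \<le> 1 - \<epsilon>\<^sup>2" using tB by blast
      moreover have "tA * tB \<le> tB" using mult_right_mono[OF tA(3) tB(2)] by simp
      ultimately show ?thesis by linarith
    qed
    thus "swap_test_accept_prob Q S \<psi> \<le> 1 - \<epsilon>^2 / 2" unfolding acc2 by simp
  qed
  show ?thesis using part1 part2 unfolding E_def Q_def by blast
qed

end
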